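(* There is a universal constant $K_0\le 4$ such that for any two independent real random variables $X,Y$ with finite second moments, \[ \operatorname{Var}|X+Y| \;\ge\; \frac{\max\{\operatorname{Var}|X+\mathbb{E}Y|,\ \operatorname{Var}|Y+\mathbb{E}X|\}}{K_0}. \]
   Context: $\operatorname{Var} Z=\mathbb{E}[Z^2]-(\mathbb{E}Z)^2$. *)

theory Defs
  imports "HOL-Probability.Probability"
begin

end

theory Submission
  imports Defs
begin

context prob_space begin

lemma indep_var_swap:
  assumes "indep_var S X T Y" shows "indep_var T Y S X"
proof -
  have *: "\<forall>b\<in>B. \<forall>a\<in>A. prob (b \<inter> a) = prob b * prob a"
    if h: "\<forall>a\<in>A. \<forall>b\<in>B. prob (a \<inter> b) = prob a * prob b" for A B
  proof (intro ballI)
    fix b a assume "b \<in> B" "a \<in> A"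
    with h have "prob (a \<inter> b) = prob a * prob b" by blast
    thus "prob (b \<inter> a) = prob b * prob a" by (simp add: Int_commute mult.commute)
  qed
  from assms show ?thesis unfolding indep_var_eq indep_sets2_eq using * by (intro conjI) auto
qed

lemma pw:
  fixes Y :: "'a \<Rightarrow> real"
  assumes Ym[measurable]: "Y \<in> borel_measurable M" and Y2: "integrable M (\<lambda>\<omega>. (Y \<omega>)\<^sup>2)" and le: "x' \<le> x"
  shows "(\<bar>x + expectation Y\<bar> - \<bar>x' + expectation Y\<bar>)\<^sup>2 / 4 \<le>
    expectation (\<lambda>\<omega>. (x + Y \<omega>)\<^sup>2) + expectation (\<lambda>\<omega>. (x' + Y \<omega>)\<^sup>2)
    - 2 * expectation (\<lambda>\<omega>. \<bar>x + Y \<omega>\<bar>) * expectation (\<lambda>\<omega>. \<bar>x' + Y \<omega>\<bar>)"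
proof -
  have Y1: "integrable M Y" using square_integrable_imp_integrable[OF Ym Y2] .
  define c where "c = (x + x') / 2"
  define d where "d = (x - x') / 2"
  have d0: "0 \<le> d" using le by (simp add: d_def)
  define T where "T \<omega> = c + Y \<omega>" for \<omega>
  define K where "K \<omega> = max (-d) (min d (T \<omega>))" for \<omega>
  define R where "R \<omega> = T \<omega> - K \<omega>" for \<omega>
  have [measurable]: "T \<in> borel_measurable M" "K \<in> borel_measurable M" "R \<in> borel_measurable M"
    unfolding T_def K_def R_def by measurable
  have A1: "\<bar>x + Y \<omega>\<bar> = d + K \<omega> + \<bar>R \<omega>\<bar>" for \<omega>
    unfolding R_def K_def T_def c_def d_def using le by (auto simp: max_def min_def abs_if field_simps)
  have A2: "\<bar>x' + Y \<omega>\<bar> = d - K \<omega> + \<bar>R \<omega>\<bar>" for \<omega>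
    unfolding R_def K_def T_def c_def d_def using le by (auto simp: max_def min_def abs_if field_simps)
  have Kb: "\<bar>K \<omega>\<bar> \<le> d" for \<omega> using d0 unfolding K_def by auto
  have TI: "integrable M T" unfolding T_def using Y1 by simp
  have T2I: "integrable M (\<lambda>\<omega>. (T \<omega>)\<^sup>2)" unfolding T_def power2_sum using Y1 Y2 by simp
  have KI: "integrable M K"
    by (rule integrable_const_bound[where B=d]) (use Kb in auto)
  have K2I: "integrable M (\<lambda>\<omega>. (K \<omega>)\<^sup>2)"
    by (rule integrable_const_bound[where B="d\<^sup>2"]) (use Kb d0 in \<open>auto simp: abs_le_square_iff[symmetric]\<close>)
  have RI: "integrable M R" unfolding R_def using TI KI by simp
  have RaI: "integrable M (\<lambda>\<omega>. \<bar>R \<omega>\<bar>)" using RI by simp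
  have R2I: "integrable M (\<lambda>\<omega>. (R \<omega>)\<^sup>2)"
  proof (rule Bochner_Integration.integrable_bound[where f="\<lambda>\<omega>. (T \<omega>)\<^sup>2"])
    show "AE \<omega> in M. norm ((R \<omega>)\<^sup>2) \<le> norm ((T \<omega>)\<^sup>2)"
      unfolding R_def K_def using d0 by (auto simp: abs_le_square_iff[symmetric] max_def min_def)
  qed (use T2I in auto)
  define k where "k = expectation K"
  define \<alpha> where "\<alpha> = expectation (\<lambda>\<omega>. \<bar>R \<omega>\<bar>)"
  define r where "r = expectation R"
  define \<rho> where "\<rho> = expectation (\<lambda>\<omega>. (R \<omega>)\<^sup>2)"
  define \<kappa> where "\<kappa> = expectation (\<lambda>\<omega>. (K \<omega>)\<^sup>2)"
  define e where "e = expectation T"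
  have E1: "expectation (\<lambda>\<omega>. \<bar>x + Y \<omega>\<bar>) = d + k + \<alpha>"
    unfolding A1 k_def \<alpha>_def using KI RaI by (simp add: prob_space)
  have E2: "expectation (\<lambda>\<omega>. \<bar>x' + Y \<omega>\<bar>) = d - k + \<alpha>"
    unfolding A2 k_def \<alpha>_def using KI RaI by (simp add: prob_space)
  have "(\<lambda>\<omega>. (x + Y \<omega>)\<^sup>2 + (x' + Y \<omega>)\<^sup>2) = (\<lambda>\<omega>. 2 * d\<^sup>2 + 4 * d * \<bar>R \<omega>\<bar> + 2 * (R \<omega>)\<^sup>2 + 2 * (K \<omega>)\<^sup>2)"
  proof
    fix \<omega>
    have "(x + Y \<omega>)\<^sup>2 + (x' + Y \<omega>)\<^sup>2 = \<bar>x + Y \<omega>\<bar>\<^sup>2 + \<bar>x' + Y \<omega>\<bar>\<^sup>2" by simp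
    also have "\<dots> = 2 * d\<^sup>2 + 4 * d * \<bar>R \<omega>\<bar> + 2 * (R \<omega>)\<^sup>2 + 2 * (K \<omega>)\<^sup>2"
      unfolding A1 A2 by (simp add: power2_eq_square algebra_simps)
    finally show "(x + Y \<omega>)\<^sup>2 + (x' + Y \<omega>)\<^sup>2 = 2 * d\<^sup>2 + 4 * d * \<bar>R \<omega>\<bar> + 2 * (R \<omega>)\<^sup>2 + 2 * (K \<omega>)\<^sup>2" .
  qed
  moreover have "integrable M (\<lambda>\<omega>. (x + Y \<omega>)\<^sup>2)" "integrable M (\<lambda>\<omega>. (x' + Y \<omega>)\<^sup>2)"
    unfolding power2_sum using Y1 Y2 by simp_all
  ultimately have E3: "expectation (\<lambda>\<omega>. (x + Y \<omega>)\<^sup>2) + expectation (\<lambda>\<omega>. (x' + Y \<omega>)\<^sup>2)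
      = 2 * d\<^sup>2 + 4 * d * \<alpha> + 2 * \<rho> + 2 * \<kappa>"
    using RaI R2I K2I
    by (simp add: Bochner_Integration.integral_add[symmetric] prob_space \<alpha>_def \<rho>_def \<kappa>_def)
  have EY: "expectation Y = e - c" unfolding e_def T_def using Y1 by (simp add: prob_space)
  have ekr: "e = k + r" unfolding e_def k_def r_def
  proof -
    have "T = (\<lambda>\<omega>. K \<omega> + R \<omega>)" by (auto simp: R_def)
    thus "expectation T = expectation K + expectation R" using KI RI by simp
  qed
  have ra: "r\<^sup>2 \<le> \<alpha>\<^sup>2"
  proof -
    have "\<bar>r\<bar> \<le> \<alpha>" unfolding r_def \<alpha>_def by (rule integral_abs_bound)
    thus ?thesis using power_mono[OF \<open>\<bar>r\<bar> \<le> \<alpha>\<close> abs_ge_zero, of 2] by simp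
  qed
  have ar: "\<alpha>\<^sup>2 \<le> \<rho>"
  proof -
    have "0 \<le> expectation (\<lambda>\<omega>. (\<bar>R \<omega>\<bar> - \<alpha>)\<^sup>2)" by simp
    also have "\<dots> = \<rho> - \<alpha>\<^sup>2"
      using RaI R2I unfolding power2_diff \<rho>_def \<alpha>_def
      by (simp add: prob_space power2_eq_square)
    finally show ?thesis by simp
  qed
  have k0: "0 \<le> \<kappa>" unfolding \<kappa>_def by simp
  have RHS: "expectation (\<lambda>\<omega>. (x + Y \<omega>)\<^sup>2) + expectation (\<lambda>\<omega>. (x' + Y \<omega>)\<^sup>2)
    - 2 * expectation (\<lambda>\<omega>. \<bar>x + Y \<omega>\<bar>) * expectation (\<lambda>\<omega>. \<bar>x' + Y \<omega>\<bar>)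
    = 2 * \<rho> + 2 * \<kappa> - 2 * \<alpha>\<^sup>2 + 2 * k\<^sup>2"
    unfolding E1 E2 E3 by (simp add: power2_eq_square algebra_simps)
  have xa: "x + expectation Y = e + d" "x' + expectation Y = e - d"
    unfolding EY c_def d_def by (simp_all add: field_simps)
  have L1: "(\<bar>e + d\<bar> - \<bar>e - d\<bar>)\<^sup>2 / 4 \<le> d\<^sup>2"
  proof -
    have "\<bar>\<bar>e + d\<bar> - \<bar>e - d\<bar>\<bar> \<le> 2 * d" using d0 by (auto simp: abs_if)
    from power_mono[OF this abs_ge_zero, of 2] have "(\<bar>e + d\<bar> - \<bar>e - d\<bar>)\<^sup>2 \<le> (2 * d)\<^sup>2" by simp
    thus ?thesis by (simp add: power2_eq_square)
  qed
  have L2: "(\<bar>e + d\<bar> - \<bar>e - d\<bar>)\<^sup>2 / 4 \<le> e\<^sup>2"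
  proof -
    have "\<bar>\<bar>e + d\<bar> - \<bar>e - d\<bar>\<bar> \<le> \<bar>2 * e\<bar>" using d0 by (auto simp: abs_if)
    from power_mono[OF this abs_ge_zero, of 2] have "(\<bar>e + d\<bar> - \<bar>e - d\<bar>)\<^sup>2 \<le> (2 * e)\<^sup>2" by simp
    thus ?thesis by (simp add: power2_eq_square)
  qed
  have key: "d\<^sup>2 \<le> 2 * \<kappa> \<or> 2 * \<alpha>\<^sup>2 \<le> \<rho>"
  proof (cases "d = 0 \<or> \<alpha> = 0")
    case True
    then show ?thesis using k0 ar by auto
  next
    case False
    hence dp: "0 < d" using d0 by auto
    have a0: "0 \<le> \<alpha>" unfolding \<alpha>_def by simp
    hence ap: "0 < \<alpha>" using False by auto
    have pt: "\<bar>R \<omega>\<bar> \<le> (R \<omega>)\<^sup>2 / (4 * \<alpha>) + \<alpha> * ((K \<omega>)\<^sup>2 / d\<^sup>2)" for \<omega>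
    proof (cases "R \<omega> = 0")
      case True then show ?thesis using ap by simp
    next
      case False
      hence "\<bar>K \<omega>\<bar> = d" unfolding R_def K_def using d0 by (auto simp: max_def min_def split: if_splits)
      hence "(K \<omega>)\<^sup>2 = d\<^sup>2" by (metis power2_abs)
      hence Kd: "(K \<omega>)\<^sup>2 / d\<^sup>2 = 1" using dp by simp
      have "0 \<le> (\<bar>R \<omega>\<bar> - 2 * \<alpha>)\<^sup>2" by simp
      hence "4 * \<alpha> * \<bar>R \<omega>\<bar> \<le> (R \<omega>)\<^sup>2 + 4 * \<alpha>\<^sup>2"
        by (simp add: power2_eq_square algebra_simps)
      hence "\<bar>R \<omega>\<bar> \<le> (R \<omega>)\<^sup>2 / (4 * \<alpha>) + \<alpha>"
        using ap by (simp add: field_simps power2_eq_square)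
      thus ?thesis unfolding Kd by simp
    qed
    have "\<alpha> \<le> expectation (\<lambda>\<omega>. (R \<omega>)\<^sup>2 / (4 * \<alpha>) + \<alpha> * ((K \<omega>)\<^sup>2 / d\<^sup>2))"
    proof -
      have "integrable M (\<lambda>\<omega>. (R \<omega>)\<^sup>2 / (4 * \<alpha>) + \<alpha> * ((K \<omega>)\<^sup>2 / d\<^sup>2))"
        using R2I K2I by simp
      from integral_mono[OF RaI this pt] show ?thesis by (simp add: \<alpha>_def)
    qed
    also have "\<dots> = \<rho> / (4 * \<alpha>) + \<alpha> * (\<kappa> / d\<^sup>2)"
      using R2I K2I unfolding \<rho>_def \<kappa>_def by simp
    finally have ineq: "\<alpha> \<le> \<rho> / (4 * \<alpha>) + \<alpha> * (\<kappa> / d\<^sup>2)" .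
    show ?thesis
    proof (rule disjCI)
      assume "\<not> 2 * \<alpha>\<^sup>2 \<le> \<rho>"
      hence "\<rho> / (4 * \<alpha>) < \<alpha> / 2" using ap by (simp add: field_simps power2_eq_square)
      with ineq have "\<alpha> / 2 < \<alpha> * (\<kappa> / d\<^sup>2)" by linarith
      hence "\<alpha> * (1 / 2) < \<alpha> * (\<kappa> / d\<^sup>2)" by simp
      hence "1 / 2 < \<kappa> / d\<^sup>2" using ap mult_less_cancel_left_pos by blast
      thus "d\<^sup>2 \<le> 2 * \<kappa>" using dp by (simp add: field_simps)
    qed
  qed
  have "(\<bar>e + d\<bar> - \<bar>e - d\<bar>)\<^sup>2 / 4 \<le> 2 * \<rho> + 2 * \<kappa> - 2 * \<alpha>\<^sup>2 + 2 * k\<^sup>2"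
    using key
  proof
    assume "d\<^sup>2 \<le> 2 * \<kappa>" thus ?thesis using L1 ar zero_le_power2[of k] by linarith
  next
    assume h: "2 * \<alpha>\<^sup>2 \<le> \<rho>"
    have "e\<^sup>2 \<le> 2 * k\<^sup>2 + 2 * r\<^sup>2" unfolding ekr
      using zero_le_power2[of "k - r"] by (simp add: power2_eq_square algebra_simps)
    thus ?thesis using L2 h ra k0 by linarith
  qed
  thus ?thesis unfolding RHS xa .
qed
lemma main:
  fixes X Y :: "'a \<Rightarrow> real"
  assumes ind: "indep_var borel X borel Y"
    and Xm[measurable]: "X \<in> borel_measurable M" and Ym[measurable]: "Y \<in> borel_measurable M"
    and X2: "integrable M (\<lambda>\<omega>. (X \<omega>)\<^sup>2)" and Y2: "integrable M (\<lambda>\<omega>. (Y \<omega>)\<^sup>2)"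
  shows "variance (\<lambda>\<omega>. \<bar>X \<omega> + expectation Y\<bar>) \<le> 4 * variance (\<lambda>\<omega>. \<bar>X \<omega> + Y \<omega>\<bar>)"
proof -
  have X1: "integrable M X" using square_integrable_imp_integrable[OF Xm X2] .
  have Y1: "integrable M Y" using square_integrable_imp_integrable[OF Ym Y2] .
  define a where "a = expectation Y"
  define s2 where "s2 = expectation (\<lambda>\<omega>. (Y \<omega>)\<^sup>2)"
  define \<phi> where "\<phi> t = expectation (\<lambda>\<omega>. \<bar>t + Y \<omega>\<bar>)" for t
  have absI: "integrable M (\<lambda>\<omega>. \<bar>t + Y \<omega>\<bar>)" for t using Y1 by simp
  have lip: "\<bar>\<phi> t - \<phi> t'\<bar> \<le> \<bar>t - t'\<bar>" for t t'
  proof -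
    have "\<phi> t \<le> expectation (\<lambda>\<omega>. \<bar>t' + Y \<omega>\<bar> + \<bar>t - t'\<bar>)"
      unfolding \<phi>_def by (rule integral_mono) (use absI in auto)
    hence 1: "\<phi> t \<le> \<phi> t' + \<bar>t - t'\<bar>" using absI by (simp add: \<phi>_def prob_space)
    have "\<phi> t' \<le> expectation (\<lambda>\<omega>. \<bar>t + Y \<omega>\<bar> + \<bar>t - t'\<bar>)"
      unfolding \<phi>_def by (rule integral_mono) (use absI in auto)
    hence 2: "\<phi> t' \<le> \<phi> t + \<bar>t - t'\<bar>" using absI by (simp add: \<phi>_def prob_space)
    from 1 2 show ?thesis by linarith
  qed
  have \<phi>m[measurable]: "\<phi> \<in> borel_measurable borel"
  proof (rule borel_measurable_continuous_onI, rule lipschitz_on_continuous_on)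
    show "1-lipschitz_on UNIV \<phi>" by (rule lipschitz_onI) (use lip in \<open>auto simp: dist_real_def\<close>)
  qed
  have \<phi>XI: "integrable M (\<lambda>\<omega>. \<phi> (X \<omega>))"
  proof (rule Bochner_Integration.integrable_bound[where f="\<lambda>\<omega>. \<bar>X \<omega>\<bar> + expectation (\<lambda>\<omega>. \<bar>Y \<omega>\<bar>)"])
    show "integrable M (\<lambda>\<omega>. \<bar>X \<omega>\<bar> + expectation (\<lambda>\<omega>. \<bar>Y \<omega>\<bar>))" using X1 by simp
    have "norm (\<phi> t) \<le> norm (\<bar>t\<bar> + expectation (\<lambda>\<omega>. \<bar>Y \<omega>\<bar>))" for t
    proof -
      have "\<phi> t \<le> expectation (\<lambda>\<omega>. \<bar>t\<bar> + \<bar>Y \<omega>\<bar>)"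
        unfolding \<phi>_def by (rule integral_mono) (use absI Y1 in auto)
      moreover have "0 \<le> \<phi> t" unfolding \<phi>_def by simp
      moreover have "0 \<le> expectation (\<lambda>\<omega>. \<bar>Y \<omega>\<bar>)" by simp
      ultimately show ?thesis using Y1 by (simp add: prob_space)
    qed
    thus "AE \<omega> in M. norm (\<phi> (X \<omega>)) \<le> norm (\<bar>X \<omega>\<bar> + expectation (\<lambda>\<omega>. \<bar>Y \<omega>\<bar>))" by simp
  qed simp
  have F1: "expectation (\<lambda>\<omega>. \<bar>X \<omega> + Y \<omega>\<bar>) = expectation (\<lambda>\<omega>. \<phi> (X \<omega>))"
  proof -
    interpret PX: prob_space "distr M borel X" by (rule prob_space_distr) simp
    interpret PY: prob_space "distr M borel Y" by (rule prob_space_distr) simp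
    interpret P: pair_prob_space "distr M borel X" "distr M borel Y" ..
    have dist: "distr M borel X \<Otimes>\<^sub>M distr M borel Y = distr M (borel \<Otimes>\<^sub>M borel) (\<lambda>\<omega>. (X \<omega>, Y \<omega>))"
      using ind unfolding indep_var_distribution_eq by simp
    define f where "f = (\<lambda>p::real \<times> real. \<bar>fst p + snd p\<bar>)"
    have fm[measurable]: "f \<in> borel_measurable (borel \<Otimes>\<^sub>M borel)" unfolding f_def by measurable
    have fI: "integrable (distr M borel X \<Otimes>\<^sub>M distr M borel Y) f"
      unfolding dist by (subst integrable_distr_eq) (use X1 Y1 in \<open>auto simp: f_def\<close>)
    have "expectation (\<lambda>\<omega>. \<bar>X \<omega> + Y \<omega>\<bar>) = integral\<^sup>L (distr M (borel \<Otimes>\<^sub>M borel) (\<lambda>\<omega>. (X \<omega>, Y \<omega>))) f"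
      by (subst integral_distr) (auto simp: f_def)
    also have "\<dots> = integral\<^sup>L (distr M borel X \<Otimes>\<^sub>M distr M borel Y) f" by (simp add: dist)
    also have "\<dots> = (\<integral>x. (\<integral>y. f (x, y) \<partial>distr M borel Y) \<partial>distr M borel X)"
      by (rule P.integral_fst'[symmetric, OF fI])
    also have "\<dots> = (\<integral>x. \<phi> x \<partial>distr M borel X)"
      by (rule Bochner_Integration.integral_cong) (auto simp: \<phi>_def f_def integral_distr)
    also have "\<dots> = expectation (\<lambda>\<omega>. \<phi> (X \<omega>))" by (simp add: integral_distr)
    finally show ?thesis .
  qed
  have EXY: "expectation (\<lambda>\<omega>. X \<omega> * Y \<omega>) = expectation X * a"
    unfolding a_def by (rule indep_var_lebesgue_integral[OF ind X1 Y1])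
  have XYI: "integrable M (\<lambda>\<omega>. X \<omega> * Y \<omega>)" by (rule indep_var_integrable[OF ind X1 Y1])
  have F2: "expectation (\<lambda>\<omega>. (X \<omega> + Y \<omega>)\<^sup>2) = expectation (\<lambda>\<omega>. (X \<omega>)\<^sup>2) + 2 * expectation X * a + s2"
    unfolding power2_sum s2_def using X2 Y2 XYI EXY by (simp add: mult.assoc)
  have EtY: "expectation (\<lambda>\<omega>. (t + Y \<omega>)\<^sup>2) = t\<^sup>2 + 2 * t * a + s2" for t
    unfolding power2_sum s2_def a_def using Y1 Y2 by (simp add: prob_space)
  have PW: "(\<bar>t + a\<bar> - \<bar>w + a\<bar>)\<^sup>2 / 4 \<le> (t\<^sup>2 + 2 * t * a + s2) + (w\<^sup>2 + 2 * w * a + s2) - 2 * \<phi> t * \<phi> w" for t w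
  proof (cases "w \<le> t")
    case True
    from pw[OF Ym Y2 True] show ?thesis unfolding EtY \<phi>_def a_def .
  next
    case False
    hence "t \<le> w" by simp
    from pw[OF Ym Y2 this] show ?thesis unfolding EtY \<phi>_def a_def
      by (simp add: power2_commute algebra_simps)
  qed
  define x1 where "x1 = expectation X"
  define x2 where "x2 = expectation (\<lambda>\<omega>. (X \<omega>)\<^sup>2)"
  define m1 where "m1 = expectation (\<lambda>\<omega>. \<bar>X \<omega> + a\<bar>)"
  define m2 where "m2 = expectation (\<lambda>\<omega>. (X \<omega> + a)\<^sup>2)"
  define G where "G = expectation (\<lambda>\<omega>. \<phi> (X \<omega>))"
  have XaI: "integrable M (\<lambda>\<omega>. \<bar>X \<omega> + a\<bar>)" using X1 by simp
  have Xa2I: "integrable M (\<lambda>\<omega>. (X \<omega> + a)\<^sup>2)" unfolding power2_sum using X1 X2 by simp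
  have LHSint: "expectation (\<lambda>\<omega>. (\<bar>X \<omega> + a\<bar> - v)\<^sup>2 / 4) = (m2 - 2 * v * m1 + v\<^sup>2) / 4" for v
  proof -
    have "(\<lambda>\<omega>. (\<bar>X \<omega> + a\<bar> - v)\<^sup>2 / 4) = (\<lambda>\<omega>. ((X \<omega> + a)\<^sup>2 - 2 * v * \<bar>X \<omega> + a\<bar> + v\<^sup>2) / 4)"
      by (auto simp: power2_diff algebra_simps)
    thus ?thesis using XaI Xa2I by (simp add: m1_def m2_def prob_space)
  qed
  have LHSI: "integrable M (\<lambda>\<omega>. (\<bar>X \<omega> + a\<bar> - v)\<^sup>2 / 4)" for v
  proof -
    have "(\<lambda>\<omega>. (\<bar>X \<omega> + a\<bar> - v)\<^sup>2 / 4) = (\<lambda>\<omega>. ((X \<omega> + a)\<^sup>2 - 2 * v * \<bar>X \<omega> + a\<bar> + v\<^sup>2) / 4)"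
      by (auto simp: power2_diff algebra_simps)
    thus ?thesis using XaI Xa2I by simp
  qed
  have RHSI: "integrable M (\<lambda>\<omega>. ((X \<omega>)\<^sup>2 + 2 * X \<omega> * a + s2) + (w\<^sup>2 + 2 * w * a + s2) - 2 * \<phi> (X \<omega>) * \<phi> w)" for w
    using X1 X2 \<phi>XI by simp
  have RHSint: "expectation (\<lambda>\<omega>. ((X \<omega>)\<^sup>2 + 2 * X \<omega> * a + s2) + (w\<^sup>2 + 2 * w * a + s2) - 2 * \<phi> (X \<omega>) * \<phi> w)
     = (x2 + 2 * x1 * a + s2) + (w\<^sup>2 + 2 * w * a + s2) - 2 * G * \<phi> w" for w
    using X1 X2 \<phi>XI by (simp add: x1_def x2_def G_def prob_space)
  have S1: "(m2 - 2 * \<bar>w + a\<bar> * m1 + \<bar>w + a\<bar>\<^sup>2) / 4 \<le> (x2 + 2 * x1 * a + s2) + (w\<^sup>2 + 2 * w * a + s2) - 2 * G * \<phi> w" for w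
  proof -
    have "expectation (\<lambda>\<omega>. (\<bar>X \<omega> + a\<bar> - \<bar>w + a\<bar>)\<^sup>2 / 4) \<le> expectation (\<lambda>\<omega>. ((X \<omega>)\<^sup>2 + 2 * X \<omega> * a + s2) + (w\<^sup>2 + 2 * w * a + s2) - 2 * \<phi> (X \<omega>) * \<phi> w)"
      by (rule integral_mono[OF LHSI RHSI]) (rule PW)
    thus ?thesis unfolding LHSint RHSint .
  qed
  have L2I: "integrable M (\<lambda>\<omega>. (m2 - 2 * \<bar>X \<omega> + a\<bar> * m1 + \<bar>X \<omega> + a\<bar>\<^sup>2) / 4)"
    using XaI Xa2I by simp
  have L2: "expectation (\<lambda>\<omega>. (m2 - 2 * \<bar>X \<omega> + a\<bar> * m1 + \<bar>X \<omega> + a\<bar>\<^sup>2) / 4) = (m2 - 2 * m1 * m1 + m2) / 4"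
    using XaI Xa2I by (simp add: m1_def m2_def prob_space)
  have R2I: "integrable M (\<lambda>\<omega>. (x2 + 2 * x1 * a + s2) + ((X \<omega>)\<^sup>2 + 2 * X \<omega> * a + s2) - 2 * G * \<phi> (X \<omega>))"
    using X1 X2 \<phi>XI by simp
  have R2: "expectation (\<lambda>\<omega>. (x2 + 2 * x1 * a + s2) + ((X \<omega>)\<^sup>2 + 2 * X \<omega> * a + s2) - 2 * G * \<phi> (X \<omega>))
      = (x2 + 2 * x1 * a + s2) + (x2 + 2 * x1 * a + s2) - 2 * G * G"
    using X1 X2 \<phi>XI by (simp add: x1_def x2_def G_def prob_space)
  have S2: "(m2 - 2 * m1 * m1 + m2) / 4 \<le> (x2 + 2 * x1 * a + s2) + (x2 + 2 * x1 * a + s2) - 2 * G * G"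
  proof -
    have "expectation (\<lambda>\<omega>. (m2 - 2 * \<bar>X \<omega> + a\<bar> * m1 + \<bar>X \<omega> + a\<bar>\<^sup>2) / 4) \<le> expectation (\<lambda>\<omega>. (x2 + 2 * x1 * a + s2) + ((X \<omega>)\<^sup>2 + 2 * X \<omega> * a + s2) - 2 * G * \<phi> (X \<omega>))"
      by (rule integral_mono[OF L2I R2I]) (rule S1)
    thus ?thesis unfolding L2 R2 .
  qed
  have V1: "variance (\<lambda>\<omega>. \<bar>X \<omega> + a\<bar>) = m2 - m1\<^sup>2"
    using variance_eq[of "\<lambda>\<omega>. \<bar>X \<omega> + a\<bar>"] XaI Xa2I by (simp add: m1_def m2_def)
  have XY2I: "integrable M (\<lambda>\<omega>. (X \<omega> + Y \<omega>)\<^sup>2)" unfolding power2_sum using X2 Y2 XYI by (simp add: mult.assoc)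
  have V2: "variance (\<lambda>\<omega>. \<bar>X \<omega> + Y \<omega>\<bar>) = x2 + 2 * x1 * a + s2 - G\<^sup>2"
    using variance_eq[of "\<lambda>\<omega>. \<bar>X \<omega> + Y \<omega>\<bar>"] XY2I X1 Y1 F1 F2
    by (simp add: x1_def x2_def G_def)
  have "variance (\<lambda>\<omega>. \<bar>X \<omega> + a\<bar>) \<le> 4 * variance (\<lambda>\<omega>. \<bar>X \<omega> + Y \<omega>\<bar>)"
  proof -
    have "m2 - m1\<^sup>2 \<le> 4 * (x2 + 2 * x1 * a + s2 - G\<^sup>2)" using S2 unfolding power2_eq_square by (simp add: field_simps)
    thus ?thesis unfolding V1 V2 .
  qed
  thus ?thesis unfolding a_def .
qed

end

theorem lemma5:
  shows "\<exists>K0::real. 0 < K0 \<and> K0 \<le> 4 \<and>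
    (\<forall>(M::'a measure) (X::'a \<Rightarrow> real) (Y::'a \<Rightarrow> real).
       prob_space M \<longrightarrow>
       X \<in> borel_measurable M \<longrightarrow> Y \<in> borel_measurable M \<longrightarrow>
       prob_space.indep_var M borel X borel Y \<longrightarrow>
       integrable M (\<lambda>\<omega>. (X \<omega>)\<^sup>2) \<longrightarrow> integrable M (\<lambda>\<omega>. (Y \<omega>)\<^sup>2) \<longrightarrow>
       prob_space.variance M (\<lambda>\<omega>. \<bar>X \<omega> + Y \<omega>\<bar>) \<ge>
         max (prob_space.variance M (\<lambda>\<omega>. \<bar>X \<omega> + prob_space.expectation M Y\<bar>))
             (prob_space.variance M (\<lambda>\<omega>. \<bar>Y \<omega> + prob_space.expectation M X\<bar>)) / K0)"
proof -
  have main_all: "prob_space.variance M (\<lambda>\<omega>. \<bar>X \<omega> + Y \<omega>\<bar>) \<ge>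
         max (prob_space.variance M (\<lambda>\<omega>. \<bar>X \<omega> + prob_space.expectation M Y\<bar>))
             (prob_space.variance M (\<lambda>\<omega>. \<bar>Y \<omega> + prob_space.expectation M X\<bar>)) / 4"
  if ps: "prob_space M" and Xm: "X \<in> borel_measurable M" and Ym: "Y \<in> borel_measurable M"
    and ind: "prob_space.indep_var M borel X borel Y"
    and X2: "integrable M (\<lambda>\<omega>. (X \<omega>)\<^sup>2)" and Y2: "integrable M (\<lambda>\<omega>. (Y \<omega>)\<^sup>2)"
  for M :: "'a measure" and X Y :: "'a \<Rightarrow> real"
  proof -
  interpret prob_space M by (rule ps)
  have 1: "variance (\<lambda>\<omega>. \<bar>X \<omega> + expectation Y\<bar>) \<le> 4 * variance (\<lambda>\<omega>. \<bar>X \<omega> + Y \<omega>\<bar>)"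
    by (rule main[OF ind Xm Ym X2 Y2])
  have 2: "variance (\<lambda>\<omega>. \<bar>Y \<omega> + expectation X\<bar>) \<le> 4 * variance (\<lambda>\<omega>. \<bar>Y \<omega> + X \<omega>\<bar>)"
    by (rule main[OF indep_var_swap[OF ind] Ym Xm Y2 X2])
  have "(\<lambda>\<omega>. \<bar>Y \<omega> + X \<omega>\<bar>) = (\<lambda>\<omega>. \<bar>X \<omega> + Y \<omega>\<bar>)" by (simp add: add.commute)
  have 3: "variance (\<lambda>\<omega>. \<bar>Y \<omega> + expectation X\<bar>) \<le> 4 * variance (\<lambda>\<omega>. \<bar>X \<omega> + Y \<omega>\<bar>)"
    using 2 by (simp add: add.commute)
  show "max (variance (\<lambda>\<omega>. \<bar>X \<omega> + expectation Y\<bar>)) (variance (\<lambda>\<omega>. \<bar>Y \<omega> + expectation X\<bar>)) / 4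
      \<le> variance (\<lambda>\<omega>. \<bar>X \<omega> + Y \<omega>\<bar>)"
    using 1 3 by (simp add: max_def)
  qed
  show ?thesis by (rule exI[of _ 4]) (use main_all in auto)
qed

end
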